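(* Let $p>3$ be a prime and $q>6p^4$ a prime. Let $G=\mathbb{Z}_6^5\times\mathbb{Z}_q$, $H=\mathbb{Z}_p^4$, let $A\subset G$ be the set defined in the context, and let $B\subset H$ be a spectral set with $|B|=2p$. Then for every map $t:A\to H$, the set $$P_t=\bigcup_{a\in A}\{a\}\times (t(a)+B)\subset G\times H$$ is not a tile in $G\times H$.
   Context: A subset $X$ of a finite abelian group $E$ is a tile if there is $\Lambda\subset E$ such that every element of $E$ is uniquely written as $x+\lambda$ with $x\in X$, $\lambda\in\Lambda$. $X$ is spectral if there is a set $S$ of characters of $E$ whose restrictions to $X$ form an orthogonal basis of $L^2(X)$ (equivalently $|S|=|X|$ and $\hat 1_X(s-s')=0$ for all distinct $s,s'\in S$, where $\hat f(\gamma)=\sum_{x\in E}f(x)\gamma(x)$). Construction of $A$: let $v=(1,2,3,4,5)\in\mathbb{Z}_6^5$; for a permutation $\pi\in S_5$ let $\pi(v)$ be the vector with permuted coordinates and $A_\pi=\{x\in\mathbb{Z}_6^5:\langle \pi(v),x\rangle\equiv 0 \pmod 6\}$ (a subgroup of order $6^4$). Enumerate $S_5$ as $\pi_0,\dots,\pi_{119}$. For $0\le k\le 119$ put $A_k=A_{\pi_k}\times\{k\}$, for $120\le k\le q-1$ put $A_k=A_{\pi_0}\times\{k\}$, and $A=\bigcup_{k=0}^{q-1}A_k\subset G$. *)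

theory Defs
  imports "HOL-Analysis.Analysis" "HOL-Combinatorics.Permutations"
begin

text \<open>The finite abelian group Z_{m_0} x ... x Z_{m_{n-1}}, given by its list of moduli ms;
  elements are integer lists with 0 <= x_i < m_i, addition is componentwise modulo m_i.\<close>

definition zcar :: "nat list \<Rightarrow> int list set" where
  "zcar ms = {xs. length xs = length ms \<and> (\<forall>i<length ms. 0 \<le> xs!i \<and> xs!i < int (ms!i))}"

definition zadd :: "nat list \<Rightarrow> int list \<Rightarrow> int list \<Rightarrow> int list" where
  "zadd ms xs ys = map (\<lambda>i. (xs!i + ys!i) mod int (ms!i)) [0..<length ms]"

definition zchar :: "nat list \<Rightarrow> int list \<Rightarrow> int list \<Rightarrow> complex" where
  "zchar ms s x = cis (2 * pi * (\<Sum>i<length ms. real_of_int (s!i * x!i) / real (ms!i)))"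

definition is_tile :: "'a set \<Rightarrow> ('a \<Rightarrow> 'a \<Rightarrow> 'a) \<Rightarrow> 'a set \<Rightarrow> bool" where
  "is_tile E add X \<longleftrightarrow> X \<subseteq> E \<and>
     (\<exists>\<Lambda>. \<Lambda> \<subseteq> E \<and> (\<forall>z\<in>E. \<exists>!pr. pr \<in> X \<times> \<Lambda> \<and> z = add (fst pr) (snd pr)))"

text \<open>Spectral set: a set S of |X| characters whose restrictions to X are pairwise orthogonal
  in L^2(X) (hence an orthogonal basis of L^2(X)).\<close>

definition is_spectral :: "nat list \<Rightarrow> int list set \<Rightarrow> bool" where
  "is_spectral ms X \<longleftrightarrow> X \<subseteq> zcar ms \<and>
     (\<exists>S. S \<subseteq> zcar ms \<and> card S = card X \<and>
       (\<forall>s\<in>S. \<forall>s'\<in>S. s \<noteq> s' \<longrightarrow> (\<Sum>x\<in>X. zchar ms s x * cnj (zchar ms s' x)) = 0))"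

definition G_ms :: "nat \<Rightarrow> nat list" where "G_ms q = replicate 5 6 @ [q]"
definition H_ms :: "nat \<Rightarrow> nat list" where "H_ms p = replicate 4 p"

text \<open>A_pi = {x in Z_6^5 : <pi(v), x> = 0 mod 6}, v = (1,...,5), (pi v)_i = v_{pi i}.\<close>

definition A_pi :: "(nat \<Rightarrow> nat) \<Rightarrow> int list set" where
  "A_pi \<pi> = {x \<in> zcar (replicate 5 6). (\<Sum>i<5. int (\<pi> i + 1) * x!i) mod 6 = 0}"

text \<open>A = union over k<q of A_{pi_k} x {k} (with pi_k = pi_0 for k >= 120), e the enumeration of S_5.\<close>

definition A_set :: "(nat \<Rightarrow> nat \<Rightarrow> nat) \<Rightarrow> nat \<Rightarrow> int list set" where
  "A_set e q = {x @ [int k] | x k. k < q \<and> x \<in> A_pi (e (if k < 120 then k else 0))}"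

definition GH_add :: "nat \<Rightarrow> nat \<Rightarrow> int list \<times> int list \<Rightarrow> int list \<times> int list \<Rightarrow> int list \<times> int list" where
  "GH_add q p u w = (zadd (G_ms q) (fst u) (fst w), zadd (H_ms p) (snd u) (snd w))"

definition P_set :: "(nat \<Rightarrow> nat \<Rightarrow> nat) \<Rightarrow> nat \<Rightarrow> nat \<Rightarrow> (int list \<Rightarrow> int list) \<Rightarrow> int list set
    \<Rightarrow> (int list \<times> int list) set" where
  "P_set e q p t B = {(a, zadd (H_ms p) (t a) b) | a b. a \<in> A_set e q \<and> b \<in> B}"

end

theory Submission
  imports Defs
begin

lemma zadd_inj:
  assumes "b \<in> zcar ms" "b' \<in> zcar ms" "zadd ms u b = zadd ms u b'"
  shows "b = b'"
proof (rule nth_equalityI)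
  show "length b = length b'" using assms by (simp add: zcar_def)
next
  fix i assume i: "i < length b"
  hence il: "i < length ms" using assms by (simp add: zcar_def)
  have h1: "0 \<le> b!i" "b!i < int (ms!i)" "0 \<le> b'!i" "b'!i < int (ms!i)"
    using assms(1,2) il by (auto simp: zcar_def)
  have eqm: "(u!i + b!i) mod int (ms!i) = (u!i + b'!i) mod int (ms!i)"
    using arg_cong[OF assms(3), of "\<lambda>l. l!i"] il by (simp add: zadd_def)
  hence "b!i mod int (ms!i) = b'!i mod int (ms!i)"
  proof -
    have "b!i mod int (ms!i) = ((u!i + b!i) mod int (ms!i) - u!i) mod int (ms!i)"
      by (simp add: mod_diff_left_eq)
    also have "\<dots> = ((u!i + b'!i) mod int (ms!i) - u!i) mod int (ms!i)" using eqm by simp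
    also have "\<dots> = b'!i mod int (ms!i)" by (simp add: mod_diff_left_eq)
    finally show ?thesis .
  qed
  thus "b!i = b'!i" using h1 by simp
qed

lemma zadd_in_zcar:
  assumes "\<forall>i<length ms. ms!i > 0"
  shows "zadd ms u w \<in> zcar ms"
  using assms by (auto simp: zadd_def zcar_def)

lemma zcar_Cons: "zcar (m#ms) = (\<lambda>(x,xs). x#xs) ` ({0..<int m} \<times> zcar ms)"
proof
  show "zcar (m#ms) \<subseteq> (\<lambda>(x,xs). x#xs) ` ({0..<int m} \<times> zcar ms)"
  proof
    fix l assume l: "l \<in> zcar (m#ms)"
    then obtain x xs where lx: "l = x#xs" by (cases l) (auto simp: zcar_def)
    have "x \<in> {0..<int m}" using l lx by (force simp: zcar_def)
    moreover have "xs \<in> zcar ms" using l lx unfolding zcar_def by force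
    ultimately show "l \<in> (\<lambda>(x,xs). x#xs) ` ({0..<int m} \<times> zcar ms)" using lx by force
  qed
next
  show "(\<lambda>(x,xs). x#xs) ` ({0..<int m} \<times> zcar ms) \<subseteq> zcar (m#ms)"
    by (auto simp: zcar_def less_Suc_eq_0_disj)
qed

lemma card_zcar: "card (zcar ms) = prod_list ms"
proof (induction ms)
  case Nil
  have "zcar [] = {[]}" by (auto simp: zcar_def)
  thus ?case by simp
next
  case (Cons m ms)
  have "card (zcar (m#ms)) = card ({0..<int m} \<times> zcar ms)"
    unfolding zcar_Cons by (rule card_image) (auto simp: inj_on_def)
  also have "\<dots> = m * card (zcar ms)" by (simp add: card_cartesian_product)
  finally show ?case using Cons by simp
qed

theorem lemma3p2:
  fixes p q :: nat and e :: "nat \<Rightarrow> nat \<Rightarrow> nat" and B :: "int list set"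
    and t :: "int list \<Rightarrow> int list"
  assumes "prime p" and "p > 3" and "prime q" and "q > 6 * p ^ 4"
    and "bij_betw e {..<120} {\<pi>. \<pi> permutes {..<5}}"
    and "is_spectral (H_ms p) B" and "card B = 2 * p"
    and "\<forall>a\<in>A_set e q. t a \<in> zcar (H_ms p)"
  shows "\<not> is_tile (zcar (G_ms q) \<times> zcar (H_ms p)) (GH_add q p) (P_set e q p t B)"
proof
  define E where "E = zcar (G_ms q) \<times> zcar (H_ms p)"
  define P where "P = P_set e q p t B"
  define add where "add = GH_add q p"
  assume "is_tile (zcar (G_ms q) \<times> zcar (H_ms p)) (GH_add q p) (P_set e q p t B)"
  then obtain L where L: "L \<subseteq> E" and uniq: "\<forall>z\<in>E. \<exists>!pr. pr \<in> P \<times> L \<and> z = add (fst pr) (snd pr)"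
    unfolding is_tile_def E_def P_def add_def by blast
  have Bsub: "B \<subseteq> zcar (H_ms p)" using assms(6) by (simp add: is_spectral_def)
  have p0: "p > 0" using assms(2) by simp
  have q0: "q > 0" using assms(4) by simp
  define g0 :: "int list" where "g0 = replicate 6 0"
  have g0E: "g0 \<in> zcar (G_ms q)" using q0
    by (auto simp: g0_def zcar_def G_ms_def nth_append)
  define F where "F = {g0} \<times> zcar (H_ms p)"
  define S where "S = {pr \<in> P \<times> L. fst (add (fst pr) (snd pr)) = g0}"
  define T where "T = {(a, l). a \<in> A_set e q \<and> l \<in> L \<and> zadd (G_ms q) a (fst l) = g0}"
  define f where "f = (\<lambda>((a::int list, l::int list \<times> int list), b). ((a, zadd (H_ms p) (t a) b), l))"
  have Hpos: "\<forall>i<length (H_ms p). H_ms p ! i > 0" using p0 by (simp add: H_ms_def)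
  have "bij_betw (\<lambda>pr. add (fst pr) (snd pr)) S F"
  proof (rule bij_betwI')
    fix x y assume x: "x \<in> S" and y: "y \<in> S"
    have "add (fst x) (snd x) \<in> F" using x Hpos
      by (auto simp: S_def F_def add_def GH_add_def zadd_in_zcar)
    hence xE: "add (fst x) (snd x) \<in> E" using g0E by (auto simp: F_def E_def)
    show "(add (fst x) (snd x) = add (fst y) (snd y)) = (x = y)"
    proof
      assume eq: "add (fst x) (snd x) = add (fst y) (snd y)"
      from uniq xE have "\<exists>!pr. pr \<in> P \<times> L \<and> add (fst x) (snd x) = add (fst pr) (snd pr)" by blast
      moreover have "x \<in> P \<times> L" "y \<in> P \<times> L" using x y by (auto simp: S_def)
      ultimately show "x = y" using eq by metis
    qed simp
  next
    fix x assume "x \<in> S"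
    thus "add (fst x) (snd x) \<in> F" using Hpos
      by (auto simp: S_def F_def add_def GH_add_def zadd_in_zcar)
  next
    fix z assume z: "z \<in> F"
    hence zE: "z \<in> E" using g0E by (auto simp: F_def E_def)
    then obtain pr where pr: "pr \<in> P \<times> L" "z = add (fst pr) (snd pr)" using uniq by blast
    have "pr \<in> S" using pr z by (auto simp: S_def F_def)
    thus "\<exists>x\<in>S. z = add (fst x) (snd x)" using pr by blast
  qed
  hence cSF: "card S = card F" by (rule bij_betw_same_card)
  have "card F = p ^ 4"
    by (simp add: F_def card_cartesian_product card_zcar H_ms_def)
  have img: "f ` (T \<times> B) = S"
  proof
    show "f ` (T \<times> B) \<subseteq> S"
      by (auto simp: f_def T_def S_def P_def P_set_def add_def GH_add_def)
  next
    show "S \<subseteq> f ` (T \<times> B)"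
    proof
      fix x assume "x \<in> S"
      then obtain a b l where x: "x = ((a, zadd (H_ms p) (t a) b), l)" "a \<in> A_set e q" "b \<in> B" "l \<in> L"
        "zadd (G_ms q) a (fst l) = g0"
        by (auto simp: S_def P_def P_set_def add_def GH_add_def)
      hence "((a, l), b) \<in> T \<times> B" by (simp add: T_def)
      moreover have "x = f ((a, l), b)" using x by (simp add: f_def)
      ultimately show "x \<in> f ` (T \<times> B)" by blast
    qed
  qed
  have inj: "inj_on f (T \<times> B)"
  proof (rule inj_onI)
    fix x y assume x: "x \<in> T \<times> B" and y: "y \<in> T \<times> B" and eq: "f x = f y"
    obtain a l b where xx: "x = ((a, l), b)" by (metis prod.collapse)
    obtain a' l' b' where yy: "y = ((a', l'), b')" by (metis prod.collapse)
    have "a = a'" "l = l'" "zadd (H_ms p) (t a) b = zadd (H_ms p) (t a) b'"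
      using eq xx yy by (auto simp: f_def)
    moreover have "b = b'" using zadd_inj[OF _ _ calculation(3)] x y xx yy Bsub by auto
    ultimately show "x = y" using xx yy by simp
  qed
  have "card S = card T * (2 * p)"
    using card_image[OF inj] img assms(7) by (simp add: card_cartesian_product)
  hence "p ^ 4 = card T * (2 * p)" using cSF \<open>card F = p ^ 4\<close> by simp
  hence "even (p ^ 4)" by simp
  moreover have "odd p" using assms(1,2) prime_odd_nat by simp
  ultimately show False by simp
qed

end
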